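(* (Non-overlap scenario.) Let $\mathbf p^*\in\mathbf\Omega$ be a limiting point of the distributed projected gradient iteration with $\mathbf p^*\in\mathrm{int}\,\mathbf\Omega$ (so that $\frac{\partial J}{\partial p_i}(\mathbf p^* )=0$ for all $i$). If at $\mathbf p^*$ no two satellites have overlapping coverage regions, then $\mathbf p^*$ is a local minimum of $J$.
   Context: Coverage model. Fix an integer $n\ge 3$ and constants $r_s>0$, $\omega>0$, $T_s=2\pi/\omega$, $0<p^{\mathrm m}<r_s$. Satellites are indexed by $\mathcal N=\{1,\dots,n\}$, indices taken cyclically modulo $n$. Satellite $i$ has an initial angle $\phi_i^0$ (with $0=\phi_1^0<\phi_2^0<\dots<\phi_n^0<2\pi$), a coverage angle $\alpha_i\in(0,\pi)$, a maximum coverage intensity $\psi_i^{\mathrm m}>0$, and slope $k_i=\psi_i^{\mathrm m}/\alpha_i$. The strategy (relative position) of satellite $i$ is $p_i=(p_{ix},p_{iy})\in\Omega_i:=\{p\in\mathbb R^2:\ \|p\|_2\le p^{\mathrm m},\ (p_x+r_s)^2+p_y^2=r_s^2\}$, a closed circular arc; $\mathrm{bd}\,\Omega_i$ denotes its two endpoints and $\mathrm{int}\,\Omega_i$ the rest of the arc. Write $\mathbf p=(p_1,\dots,p_n)\in\mathbf\Omega=\prod_i\Omega_i$. Deviation angle: $\Delta\phi_i(p_i)=\operatorname{sgn}(p_{iy})\arccos\big((p_{ix}+r_s)/\sqrt{(p_{ix}+r_s)^2+p_{iy}^2}\big)$. Configuration angle at time $\tau$: $\phi_i(p_i,\tau)=\phi_i^0+\Delta\phi_i(p_i)+\omega\tau$.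 Coverage regions (angles in $\theta$, understood modulo $2\pi$): $C_i^+=(\phi_i,\phi_i+\alpha_i)$, $C_i^-=(\phi_i-\alpha_i,\phi_i)$, $C_i=C_i^+\cup C_i^-\cup\{\phi_i\}$. Local coverage intensity: $\psi_i(p_i,\theta,\tau)=\psi_i^{\mathrm m}-k_i(\theta-\phi_i)$ for $\theta\in C_i^+\cup\{\phi_i\}$, $\psi_i^{\mathrm m}+k_i(\theta-\phi_i)$ for $\theta\in C_i^-$, and $0$ otherwise (with $\theta$ shifted by a multiple of $2\pi$ so that $\theta-\phi_i\in(-\pi,\pi]$). Demand: $\mu:\mathbb R\to[0,\infty)$ continuous and $2\pi$-periodic. Global intensity $\rho(\mathbf p,\theta,\tau)=\sum_{i=1}^n\psi_i(p_i,\theta,\tau)$. Potential (accumulated average coverage cost): $J(\mathbf p)=\frac{1}{2T_s}\int_0^{T_s}\int_{\omega\tau}^{\omega\tau+2\pi}(\rho(\mathbf p,\theta,\tau)-\mu(\theta))^2\,\mathrm d\theta\,\mathrm d\tau$. The distributed projected gradient iteration is $p_i^{(k+1)}=\operatorname{proj}_{\Omega_i}\big(p_i^{(k)}-s^{(k)}\frac{\partial J}{\partial p_i}(\mathbf p^{(k)})\big)$ for all $i$. *)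

theory Defs
  imports "HOL-Analysis.Analysis"
begin

text \<open>Satellites are indexed by 1..n; a joint strategy is a map
  nat => real x real (only the values on 1..n matter).\<close>

text \<open>Reduce an angle difference to the representative in (-pi, pi].\<close>
definition wrap_angle :: "real \<Rightarrow> real" where
  "wrap_angle d = d - 2 * pi * of_int \<lceil>(d - pi) / (2 * pi)\<rceil>"

definition dev_angle :: "real \<Rightarrow> real \<times> real \<Rightarrow> real" where
  "dev_angle rs p = sgn (snd p) *
     arccos ((fst p + rs) / sqrt ((fst p + rs)\<^sup>2 + (snd p)\<^sup>2))"

definition conf_angle :: "real \<Rightarrow> real \<Rightarrow> real \<Rightarrow> real \<times> real \<Rightarrow> real \<Rightarrow> real" where
  "conf_angle rs \<omega> phi0 p \<tau> = phi0 + dev_angle rs p + \<omega> * \<tau>"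

text \<open>Coverage region C_i (as a 2pi-periodic subset of the reals).\<close>
definition cov_region ::
  "real \<Rightarrow> real \<Rightarrow> real \<Rightarrow> real \<Rightarrow> real \<times> real \<Rightarrow> real \<Rightarrow> real set" where
  "cov_region rs \<omega> phi0 \<alpha> p \<tau> =
     {\<theta>. \<bar>wrap_angle (\<theta> - conf_angle rs \<omega> phi0 p \<tau>)\<bar> < \<alpha>}"

definition local_intensity ::
  "real \<Rightarrow> real \<Rightarrow> real \<Rightarrow> real \<Rightarrow> real \<Rightarrow> real \<times> real \<Rightarrow> real \<Rightarrow> real \<Rightarrow> real" where
  "local_intensity rs \<omega> phi0 \<alpha> psim p \<theta> \<tau> =
     (let d = wrap_angle (\<theta> - conf_angle rs \<omega> phi0 p \<tau>); k = psim / \<alpha> in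
      if 0 \<le> d \<and> d < \<alpha> then psim - k * d
      else if - \<alpha> < d \<and> d < 0 then psim + k * d
      else 0)"

definition global_intensity ::
  "nat \<Rightarrow> real \<Rightarrow> real \<Rightarrow> (nat \<Rightarrow> real) \<Rightarrow> (nat \<Rightarrow> real) \<Rightarrow> (nat \<Rightarrow> real)
     \<Rightarrow> (nat \<Rightarrow> real \<times> real) \<Rightarrow> real \<Rightarrow> real \<Rightarrow> real" where
  "global_intensity n rs \<omega> phi0 \<alpha> psim p \<theta> \<tau> =
     (\<Sum>i = 1..n. local_intensity rs \<omega> (phi0 i) (\<alpha> i) (psim i) (p i) \<theta> \<tau>)"

definition coverage_cost ::
  "nat \<Rightarrow> real \<Rightarrow> real \<Rightarrow> (nat \<Rightarrow> real) \<Rightarrow> (nat \<Rightarrow> real) \<Rightarrow> (nat \<Rightarrow> real)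
     \<Rightarrow> (real \<Rightarrow> real) \<Rightarrow> (nat \<Rightarrow> real \<times> real) \<Rightarrow> real" where
  "coverage_cost n rs \<omega> phi0 \<alpha> psim \<mu> p =
     (let Ts = 2 * pi / \<omega> in
      1 / (2 * Ts) * integral {0..Ts} (\<lambda>\<tau>.
        integral {\<omega> * \<tau> .. \<omega> * \<tau> + 2 * pi} (\<lambda>\<theta>.
          (global_intensity n rs \<omega> phi0 \<alpha> psim p \<theta> \<tau> - \<mu> \<theta>)\<^sup>2)))"

text \<open>Strategy set Omega_i (closed circular arc), its endpoints and the rest of the arc.\<close>
definition Omega :: "real \<Rightarrow> real \<Rightarrow> (real \<times> real) set" where
  "Omega rs pm = {p. norm p \<le> pm \<and> (fst p + rs)\<^sup>2 + (snd p)\<^sup>2 = rs\<^sup>2}"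

definition Omega_bd :: "real \<Rightarrow> real \<Rightarrow> (real \<times> real) set" where
  "Omega_bd rs pm = {p \<in> Omega rs pm. norm p = pm}"

definition Omega_int :: "real \<Rightarrow> real \<Rightarrow> (real \<times> real) set" where
  "Omega_int rs pm = Omega rs pm - Omega_bd rs pm"

definition partial_grad ::
  "((nat \<Rightarrow> real \<times> real) \<Rightarrow> real) \<Rightarrow> (nat \<Rightarrow> real \<times> real) \<Rightarrow> nat \<Rightarrow> real \<times> real" where
  "partial_grad J p i =
     (SOME g. ((\<lambda>q. J (p(i := q))) has_derivative (\<lambda>h. inner g h)) (at (p i)))"

definition is_proj :: "(real \<times> real) set \<Rightarrow> real \<times> real \<Rightarrow> real \<times> real \<Rightarrow> bool" where
  "is_proj S x y \<longleftrightarrow> y \<in> S \<and> (\<forall>z\<in>S. dist x y \<le> dist x z)"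

end

theory Submission imports Defs begin

lemma per_int:
  fixes f :: "real \<Rightarrow> real"
  assumes cf: "continuous_on UNIV f" and per: "\<And>x. f (x + 2*pi) = f x"
  shows "integral {a..a+2*pi} f = integral {0..2*pi} f"
proof -
  define b where "b = min a 0 - 1"
  define B where "B = max a 0 + 1"
  define Phi where "Phi x = integral {b..x} f" for x
  have dPhi: "(Phi has_real_derivative f x) (at x)" if "b < x" "x < B + 2*pi + 1" for x
  proof -
    have "(Phi has_real_derivative f x) (at x within {b..B + 2*pi + 1})"
      unfolding Phi_def
      by (rule integral_has_real_derivative) (use that cf continuous_on_subset in auto)
    moreover have "x \<in> interior {b..B + 2*pi + 1}" using that by auto
    ultimately show ?thesis using at_within_interior by metis
  qed
  define G where "G y = Phi (y + 2*pi) - Phi y" for y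
  have G: "G y = integral {y..y+2*pi} f" if "b \<le> y" for y
  proof -
    have "integral {b..y} f + integral {y..y+2*pi} f = integral {b..y+2*pi} f"
      by (rule Henstock_Kurzweil_Integration.integral_combine)
         (use that pi_gt_zero in \<open>simp_all add: integrable_continuous_real continuous_on_subset[OF cf]\<close>)
    then show ?thesis unfolding G_def Phi_def by simp
  qed
  have dG: "DERIV G y :> 0" if "y \<in> {b<..<B}" for y
  proof -
    have yB: "b < y" "y < B" using that by auto
    have d1: "(Phi has_real_derivative f y) (at y)"
      by (rule dPhi) (use yB pi_gt_zero in linarith)+
    have d2: "(Phi has_real_derivative f (y + 2*pi)) (at (y + 2*pi))"
      by (rule dPhi) (use yB pi_gt_zero in linarith)+
    have d3: "((\<lambda>z. z + 2*pi) has_real_derivative 1) (at y)"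
      by (auto intro!: derivative_eq_intros)
    have d4: "((\<lambda>z. Phi (z + 2*pi)) has_real_derivative f (y + 2*pi) * 1) (at y)"
      using DERIV_chain2[OF d2 d3] by simp
    have "DERIV G y :> f (y + 2*pi) * 1 - f y"
      unfolding G_def using DERIV_diff[OF d4 d1] .
    then show ?thesis using per by simp
  qed
  have "G a = G 0"
    by (rule DERIV_isconst3[of b B]) (use dG in \<open>auto simp: b_def B_def\<close>)
  then show ?thesis using G[of a] G[of 0] by (simp add: b_def)
qed


lemma cont_shift:
  fixes g :: "real \<Rightarrow> real"
  assumes "continuous_on UNIV g" and "continuous_on S h"
  shows "continuous_on S (\<lambda>x. g (h x))"
  using continuous_on_compose2[OF assms(1) assms(2)] by auto

lemma cost_formula:
  fixes g :: "nat \<Rightarrow> real \<Rightarrow> real" and a :: "nat \<Rightarrow> real" and \<mu> :: "real \<Rightarrow> real"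
    and I :: "nat set" and \<omega> :: real
  assumes fin: "finite I" and \<omega>: "\<omega> > 0"
   and gc: "\<And>i. i\<in>I \<Longrightarrow> continuous_on UNIV (g i)"
   and gp: "\<And>i x. i\<in>I \<Longrightarrow> g i (x+2*pi) = g i x"
   and mc: "continuous_on UNIV \<mu>" and mp: "\<And>x. \<mu> (x+2*pi) = \<mu> x"
  shows "1/(2*(2*pi/\<omega>)) * integral {0..2*pi/\<omega>} (\<lambda>\<tau>. integral {\<omega>*\<tau>..\<omega>*\<tau>+2*pi}
            (\<lambda>\<theta>. ((\<Sum>i\<in>I. g i (\<theta> - (a i + \<omega>*\<tau>))) - \<mu> \<theta>)\<^sup>2))
    = 1/2 * integral {0..2*pi} (\<lambda>u. (\<Sum>i\<in>I. g i (u - a i))\<^sup>2)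
      + 1/(2*(2*pi/\<omega>)) * ((2*pi/\<omega>) * integral {0..2*pi} (\<lambda>\<theta>. (\<mu> \<theta>)\<^sup>2)
         - 2 * (\<Sum>i\<in>I. 1/\<omega> * integral {0..2*pi} (\<lambda>s. integral {0..2*pi} (\<lambda>u. g i u * \<mu> (u+s)))))"
proof -
  define R where "R u = (\<Sum>i\<in>I. g i (u - a i))" for u
  define K where "K i s = integral {0..2*pi} (\<lambda>u. g i u * \<mu> (u+s))" for i s
  define A where "A = integral {0..2*pi} (\<lambda>u. (R u)\<^sup>2)"
  define M where "M = integral {0..2*pi} (\<lambda>\<theta>. (\<mu> \<theta>)\<^sup>2)"
  define Ts where "Ts = 2*pi/\<omega>"
  have Ts: "Ts > 0" "\<omega> * Ts = 2*pi" using \<omega> by (auto simp: Ts_def)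
  have gcc: "continuous_on S (\<lambda>x. g i (h x))" if "i \<in> I" "continuous_on S h" for i S h
    by (rule cont_shift[OF gc[OF that(1)] that(2)])
  have mcc: "continuous_on S (\<lambda>x. \<mu> (h x))" if "continuous_on S h" for S h
    by (rule cont_shift[OF mc that])
  have Rc: "continuous_on S (\<lambda>x. R (h x))" if "continuous_on S h" for S h
    unfolding R_def by (intro continuous_on_sum gcc continuous_intros that)
  have Kc: "continuous_on UNIV (K i)" if "i \<in> I" for i
  proof -
    have "continuous_on (UNIV \<times> cbox 0 (2*pi)) (\<lambda>z. g i (snd z) * \<mu> (snd z + fst z))"
      by (intro continuous_intros gcc mcc that)
    then have "continuous_on UNIV (\<lambda>s. integral (cbox 0 (2*pi)) (\<lambda>u. g i u * \<mu> (u+s)))"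
      by (intro integral_continuous_on_param) (simp add: case_prod_beta)
    then show ?thesis unfolding K_def by simp
  qed
  have Kp: "K i (s + 2*pi) = K i s" for i s
    unfolding K_def by (simp add: add.assoc[symmetric] mp)
  have inner: "integral {\<omega>*\<tau>..\<omega>*\<tau>+2*pi} (\<lambda>\<theta>. ((\<Sum>i\<in>I. g i (\<theta> - (a i + \<omega>*\<tau>))) - \<mu> \<theta>)\<^sup>2)
      = A - 2 * (\<Sum>i\<in>I. K i (a i + \<omega>*\<tau>)) + M" for \<tau>
  proof -
    define c where "c = \<omega>*\<tau>"
    have eq: "((\<Sum>i\<in>I. g i (\<theta> - (a i + \<omega>*\<tau>))) - \<mu> \<theta>)\<^sup>2
       = (R (\<theta> - c))\<^sup>2 - 2 * (\<Sum>i\<in>I. g i (\<theta> - (a i + c)) * \<mu> \<theta>) + (\<mu> \<theta>)\<^sup>2" for \<theta>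
    proof -
      have "(\<Sum>i\<in>I. g i (\<theta> - (a i + \<omega>*\<tau>))) = R (\<theta> - c)"
        unfolding R_def c_def by (intro sum.cong refl) (simp add: algebra_simps)
      moreover have "(\<Sum>i\<in>I. g i (\<theta> - (a i + c)) * \<mu> \<theta>) = R (\<theta> - c) * \<mu> \<theta>"
        unfolding R_def sum_distrib_right by (intro sum.cong refl) (simp add: algebra_simps)
      ultimately show ?thesis by (simp add: power2_eq_square algebra_simps)
    qed
    have i1: "(\<lambda>\<theta>. (R (\<theta> - c))\<^sup>2) integrable_on {c..c+2*pi}"
      by (intro integrable_continuous_real continuous_intros Rc)
    have i2: "(\<lambda>\<theta>. g i (\<theta> - (a i + c)) * \<mu> \<theta>) integrable_on {c..c+2*pi}" if "i \<in> I" for i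
      by (intro integrable_continuous_real continuous_intros gcc mcc that)
    have i3: "(\<lambda>\<theta>. (\<mu> \<theta>)\<^sup>2) integrable_on {c..c+2*pi}"
      by (intro integrable_continuous_real continuous_intros mcc)
    have e1: "integral {c..c+2*pi} (\<lambda>\<theta>. (R (\<theta> - c))\<^sup>2) = A"
      using integral_shift_real_ivl[of c c "c+2*pi" "\<lambda>\<theta>. (R (\<theta> - c))\<^sup>2"] by (simp add: A_def)
    have e2: "integral {c..c+2*pi} (\<lambda>\<theta>. g i (\<theta> - (a i + c)) * \<mu> \<theta>) = K i (a i + c)" if "i \<in> I" for i
    proof -
      have "integral {c..c+2*pi} (\<lambda>\<theta>. g i (\<theta> - (a i + c)) * \<mu> \<theta>)
          = integral {- a i..- a i + 2*pi} (\<lambda>x. g i x * \<mu> (x + (a i + c)))"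
        using integral_shift_real_ivl[of c "a i + c" "c+2*pi" "\<lambda>\<theta>. g i (\<theta> - (a i + c)) * \<mu> \<theta>"]
        by (simp add: algebra_simps)
      also have "\<dots> = K i (a i + c)"
        unfolding K_def
      proof (rule per_int)
        show "continuous_on UNIV (\<lambda>x. g i x * \<mu> (x + (a i + c)))"
          using that by (auto intro!: continuous_intros gcc mcc)
        fix x
        have "\<mu> (x + 2*pi + (a i + c)) = \<mu> (x + (a i + c))"
          using mp[of "x + (a i + c)"] by (simp add: algebra_simps)
        then show "g i (x + 2*pi) * \<mu> (x + 2*pi + (a i + c)) = g i x * \<mu> (x + (a i + c))"
          using gp[OF that] by simp
      qed
      finally show ?thesis .
    qed
    have e3: "integral {c..c+2*pi} (\<lambda>\<theta>. (\<mu> \<theta>)\<^sup>2) = M"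
      unfolding M_def by (rule per_int) (auto intro!: continuous_intros mcc simp: mp)
    have "integral {c..c+2*pi} (\<lambda>\<theta>. ((\<Sum>i\<in>I. g i (\<theta> - (a i + \<omega>*\<tau>))) - \<mu> \<theta>)\<^sup>2)
       = integral {c..c+2*pi} (\<lambda>\<theta>. (R (\<theta> - c))\<^sup>2 - 2 * (\<Sum>i\<in>I. g i (\<theta> - (a i + c)) * \<mu> \<theta>) + (\<mu> \<theta>)\<^sup>2)"
      by (simp only: eq)
    also have "\<dots> = A - 2 * (\<Sum>i\<in>I. K i (a i + c)) + M"
    proof -
      have "((\<lambda>\<theta>. (R (\<theta> - c))\<^sup>2 - 2 * (\<Sum>i\<in>I. g i (\<theta> - (a i + c)) * \<mu> \<theta>) + (\<mu> \<theta>)\<^sup>2)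
         has_integral (A - 2 * (\<Sum>i\<in>I. K i (a i + c)) + M)) {c..c+2*pi}"
        apply (intro has_integral_add has_integral_diff has_integral_mult_right has_integral_sum fin)
        using i1[THEN integrable_integral, unfolded e1] i3[THEN integrable_integral, unfolded e3]
          integrable_integral[OF i2] e2 by auto
      then show ?thesis by (rule integral_unique)
    qed
    finally show ?thesis by (simp add: c_def)
  qed
  have outer: "integral {0..Ts} (\<lambda>\<tau>. K i (a i + \<omega>*\<tau>)) = 1/\<omega> * integral {0..2*pi} (K i)" if "i \<in> I" for i
  proof -
    have le: "\<omega> * x \<le> 2*pi" if "x \<le> Ts" for x
      using mult_left_mono[OF that, of \<omega>] \<omega> Ts by simp
    have "((\<lambda>x. \<omega> *\<^sub>R K i (a i + \<omega> * x)) has_integral integral {a i + \<omega>*0..a i + \<omega>*Ts} (K i)) {0..Ts}"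
      apply (rule has_integral_substitution[where c="a i" and d="a i + 2*pi"])
      using Ts \<omega> by (auto intro!: derivative_eq_intros continuous_on_subset[OF Kc[OF that]]
          simp: le)
    then have "((\<lambda>x. \<omega> * K i (a i + \<omega> * x)) has_integral integral {0..2*pi} (K i)) {0..Ts}"
      using per_int[OF Kc[OF that], of "a i"] Ts by (simp add: Kp)
    then have "((\<lambda>x. 1/\<omega> * (\<omega> * K i (a i + \<omega> * x))) has_integral 1/\<omega> * integral {0..2*pi} (K i)) {0..Ts}"
      by (rule has_integral_mult_right)
    then show ?thesis using \<omega> by (simp add: integral_unique)
  qed
  have "integral {0..Ts} (\<lambda>\<tau>. integral {\<omega>*\<tau>..\<omega>*\<tau>+2*pi}
            (\<lambda>\<theta>. ((\<Sum>i\<in>I. g i (\<theta> - (a i + \<omega>*\<tau>))) - \<mu> \<theta>)\<^sup>2))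
     = integral {0..Ts} (\<lambda>\<tau>. A - 2 * (\<Sum>i\<in>I. K i (a i + \<omega>*\<tau>)) + M)"
    by (simp only: inner)
  also have "\<dots> = Ts * A - 2 * (\<Sum>i\<in>I. integral {0..Ts} (\<lambda>\<tau>. K i (a i + \<omega>*\<tau>))) + Ts * M"
  proof -
    have ic: "(\<lambda>\<tau>. K i (a i + \<omega>*\<tau>)) integrable_on {0..Ts}" if "i \<in> I" for i
      by (intro integrable_continuous_real continuous_on_compose2[OF Kc[OF that]] continuous_intros) auto
    have "((\<lambda>\<tau>. A - 2 * (\<Sum>i\<in>I. K i (a i + \<omega>*\<tau>)) + M) has_integral
        (A * (Ts - 0) - 2 * (\<Sum>i\<in>I. integral {0..Ts} (\<lambda>\<tau>. K i (a i + \<omega>*\<tau>))) + M * (Ts - 0))) {0..Ts}"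
      apply (intro has_integral_add has_integral_diff has_integral_mult_right has_integral_sum fin has_integral_const_real)
      using integrable_integral[OF ic] has_integral_const_real[of A 0 Ts] has_integral_const_real[of M 0 Ts] Ts by (auto simp: mult.commute)
    then show ?thesis using Ts by (simp add: integral_unique algebra_simps)
  qed
  also have "\<dots> = Ts * A - 2 * (\<Sum>i\<in>I. 1/\<omega> * integral {0..2*pi} (K i)) + Ts * M"
    using outer by simp
  finally show ?thesis
    using Ts unfolding Ts_def[symmetric] A_def[symmetric] M_def[symmetric] R_def[symmetric] K_def[symmetric]
    by (simp add: field_simps)
qed


lemma wrap_props: "- pi < wrap_angle d" "wrap_angle d \<le> pi" "cos (wrap_angle d) = cos d"
proof -
  define c where "c = \<lceil>(d - pi) / (2*pi)\<rceil>"
  have c1: "of_int c - 1 < (d - pi) / (2*pi)" and c2: "(d - pi) / (2*pi) \<le> of_int c"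
    using ceiling_correct unfolding c_def by blast+
  have w: "wrap_angle d = d - 2*pi* of_int c" unfolding wrap_angle_def c_def by simp
  from c1 have "(of_int c - 1) * (2*pi) < d - pi" using pi_gt_zero by (simp add: pos_less_divide_eq)
  then show "- pi < wrap_angle d" unfolding w by (simp add: algebra_simps)
  from c2 have "d - pi \<le> of_int c * (2*pi)" using pi_gt_zero by (simp add: pos_divide_le_eq)
  then show "wrap_angle d \<le> pi" unfolding w by (simp add: algebra_simps)
  show "cos (wrap_angle d) = cos d" unfolding w by (simp add: cos_diff)
qed

lemma abs_wrap: "\<bar>wrap_angle d\<bar> = arccos (cos d)"
  using arccos_cos_eq_abs[of "wrap_angle d"] wrap_props[of d] by simp

definition G :: "real \<Rightarrow> real \<Rightarrow> real \<Rightarrow> real" where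
  "G al ps x = max 0 (ps - ps/al * arccos (cos x))"

lemma G_cont: "continuous_on UNIV (G al ps)"
  unfolding G_def
  by (intro continuous_intros continuous_on_compose2[OF continuous_on_arccos'] ) auto

lemma G_per: "G al ps (x + 2*pi) = G al ps x"
  unfolding G_def by simp

lemma G_nonneg: "G al ps x \<ge> 0"
  unfolding G_def by simp

lemma G_nz: assumes "0 < al" "0 < ps" "G al ps x \<noteq> 0" shows "arccos (cos x) < al"
proof (rule ccontr)
  assume "\<not> arccos (cos x) < al"
  then have "ps/al * arccos (cos x) \<ge> ps/al * al" using assms by (intro mult_left_mono) auto
  then have "ps - ps/al * arccos (cos x) \<le> 0" using assms by simp
  then show False using assms(3) unfolding G_def by simp
qed

lemma li_eq:
  assumes "0 < al" "0 < ps"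
  shows "local_intensity rs \<omega> phi0 al ps p \<theta> \<tau> = G al ps (\<theta> - conf_angle rs \<omega> phi0 p \<tau>)"
proof -
  define d where "d = wrap_angle (\<theta> - conf_angle rs \<omega> phi0 p \<tau>)"
  have ad: "arccos (cos (\<theta> - conf_angle rs \<omega> phi0 p \<tau>)) = \<bar>d\<bar>" unfolding d_def abs_wrap ..
  have "ps - ps/al * \<bar>d\<bar> \<le> 0" if "\<bar>d\<bar> \<ge> al"
  proof -
    have "ps/al * \<bar>d\<bar> \<ge> ps/al * al" using assms that by (intro mult_left_mono) auto
    then show ?thesis using assms by simp
  qed
  moreover have "ps - ps/al * \<bar>d\<bar> \<ge> 0" if "\<bar>d\<bar> < al"
  proof -
    have "ps/al * \<bar>d\<bar> \<le> ps/al * al" using assms that by (intro mult_left_mono) auto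
    then show ?thesis using assms by simp
  qed
  ultimately show ?thesis
    unfolding local_intensity_def G_def ad Let_def d_def[symmetric]
    by (cases "d \<ge> 0") (auto simp: max_def)
qed

lemma sq_sum_ge:
  fixes x :: "nat \<Rightarrow> real"
  assumes "finite I" "\<And>i. i \<in> I \<Longrightarrow> x i \<ge> 0"
  shows "(\<Sum>i\<in>I. (x i)\<^sup>2) \<le> (\<Sum>i\<in>I. x i)\<^sup>2"
proof -
  have "(\<Sum>i\<in>I. x i)\<^sup>2 = (\<Sum>i\<in>I. x i * (\<Sum>j\<in>I. x j))"
    by (simp add: power2_eq_square sum_distrib_right)
  moreover have "x i * x i \<le> x i * (\<Sum>j\<in>I. x j)" if "i \<in> I" for i
    using assms that by (intro mult_left_mono member_le_sum) auto
  ultimately show ?thesis by (simp add: power2_eq_square sum_mono)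
qed

lemma sq_sum_eq:
  fixes x :: "nat \<Rightarrow> real"
  assumes "finite I" "\<And>i j. i \<in> I \<Longrightarrow> j \<in> I \<Longrightarrow> i \<noteq> j \<Longrightarrow> x i * x j = 0"
  shows "(\<Sum>i\<in>I. x i)\<^sup>2 = (\<Sum>i\<in>I. (x i)\<^sup>2)"
proof -
  have "(\<Sum>i\<in>I. x i)\<^sup>2 = (\<Sum>i\<in>I. x i * (\<Sum>j\<in>I. x j))"
    by (simp add: power2_eq_square sum_distrib_right)
  also have "\<dots> = (\<Sum>i\<in>I. (x i)\<^sup>2)"
  proof (rule sum.cong[OF refl])
    fix i assume i: "i \<in> I"
    have "x i * (\<Sum>j\<in>I. x j) = (\<Sum>j\<in>I. x i * x j)" by (simp add: sum_distrib_left)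
    also have "\<dots> = x i * x i + (\<Sum>j\<in>I - {i}. x i * x j)"
      using sum.remove[OF assms(1) i] by simp
    also have "(\<Sum>j\<in>I - {i}. x i * x j) = 0"
      using assms(2)[OF i] by (intro sum.neutral) auto
    finally show "x i * (\<Sum>j\<in>I. x j) = (x i)\<^sup>2" by (simp add: power2_eq_square)
  qed
  finally show ?thesis .
qed

theorem proposition6:
  fixes n :: nat and rs \<omega> pm :: real
    and phi0 \<alpha> psim :: "nat \<Rightarrow> real" and \<mu> :: "real \<Rightarrow> real"
    and pseq :: "nat \<Rightarrow> nat \<Rightarrow> real \<times> real" and s :: "nat \<Rightarrow> real"
    and pstar :: "nat \<Rightarrow> real \<times> real"
  assumes n3: "n \<ge> 3"
    and rs_pos: "rs > 0" and \<omega>_pos: "\<omega> > 0" and pm: "0 < pm" "pm < rs"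
    and phi0_1: "phi0 1 = 0"
    and phi0_mono: "\<And>i. 1 \<le> i \<Longrightarrow> i < n \<Longrightarrow> phi0 i < phi0 (i + 1)"
    and phi0_n: "phi0 n < 2 * pi"
    and \<alpha>_rng: "\<And>i. i \<in> {1..n} \<Longrightarrow> 0 < \<alpha> i \<and> \<alpha> i < pi"
    and psim_pos: "\<And>i. i \<in> {1..n} \<Longrightarrow> psim i > 0"
    and \<mu>_cont: "continuous_on UNIV \<mu>"
    and \<mu>_nonneg: "\<And>\<theta>. \<mu> \<theta> \<ge> 0"
    and \<mu>_per: "\<And>\<theta>. \<mu> (\<theta> + 2 * pi) = \<mu> \<theta>"
    \<comment> \<open>pstar is a limiting point of the distributed projected gradient iteration\<close>
    and iter: "\<And>k i. i \<in> {1..n} \<Longrightarrow>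
       is_proj (Omega rs pm)
         (pseq k i - s k *\<^sub>R partial_grad (coverage_cost n rs \<omega> phi0 \<alpha> psim \<mu>) (pseq k) i)
         (pseq (Suc k) i)"
    and limpt: "\<exists>r. strict_mono r \<and>
       (\<forall>i\<in>{1..n}. ((\<lambda>k. pseq (r k) i) \<longlonglongrightarrow> pstar i))"
    \<comment> \<open>pstar lies in int Omega and is stationary\<close>
    and interior: "\<And>i. i \<in> {1..n} \<Longrightarrow> pstar i \<in> Omega_int rs pm"
    and stationary: "\<And>i. i \<in> {1..n} \<Longrightarrow>
       ((\<lambda>q. coverage_cost n rs \<omega> phi0 \<alpha> psim \<mu> (pstar(i := q))) has_derivative (\<lambda>h. 0))
         (at (pstar i))"
    \<comment> \<open>no two coverage regions overlap at pstar\<close>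
    and nonoverlap: "\<And>i j \<tau>. i \<in> {1..n} \<Longrightarrow> j \<in> {1..n} \<Longrightarrow> i \<noteq> j \<Longrightarrow>
       cov_region rs \<omega> (phi0 i) (\<alpha> i) (pstar i) \<tau> \<inter>
       cov_region rs \<omega> (phi0 j) (\<alpha> j) (pstar j) \<tau> = {}"
  shows "\<exists>e>0. \<forall>p. (\<forall>i\<in>{1..n}. p i \<in> Omega rs pm \<and> dist (p i) (pstar i) < e) \<longrightarrow>
           coverage_cost n rs \<omega> phi0 \<alpha> psim \<mu> pstar \<le> coverage_cost n rs \<omega> phi0 \<alpha> psim \<mu> p"
  proof -
  define g where "g i = G (\<alpha> i) (psim i)" for i
  define a where "a p i = phi0 i + dev_angle rs (p i)" for p :: "nat \<Rightarrow> real \<times> real" and i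
  have gc: "\<And>i. continuous_on UNIV (g i)" unfolding g_def by (rule G_cont)
  have gp: "\<And>i x. g i (x + 2*pi) = g i x" unfolding g_def by (rule G_per)
  have mp: "\<And>x. \<mu> (x + 2*pi) = \<mu> x" using \<mu>_per .
  define B where "B = 1/(2*(2*pi/\<omega>)) * ((2*pi/\<omega>) * integral {0..2*pi} (\<lambda>\<theta>. (\<mu> \<theta>)\<^sup>2)
         - 2 * (\<Sum>i\<in>{1..n}. 1/\<omega> * integral {0..2*pi} (\<lambda>s. integral {0..2*pi} (\<lambda>u. g i u * \<mu> (u+s)))))"
  have formula: "coverage_cost n rs \<omega> phi0 \<alpha> psim \<mu> p
      = 1/2 * integral {0..2*pi} (\<lambda>u. (\<Sum>i\<in>{1..n}. g i (u - a p i))\<^sup>2) + B" for p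
  proof -
    have gi: "global_intensity n rs \<omega> phi0 \<alpha> psim p \<theta> \<tau> = (\<Sum>i\<in>{1..n}. g i (\<theta> - (a p i + \<omega>*\<tau>)))"
      for \<theta> \<tau>
      unfolding global_intensity_def g_def a_def
      by (intro sum.cong refl) (simp add: li_eq \<alpha>_rng psim_pos conf_angle_def algebra_simps)
    show ?thesis unfolding coverage_cost_def Let_def gi B_def
      by (rule cost_formula[OF _ \<omega>_pos gc gp \<mu>_cont mp]) simp
  qed
  have shift: "integral {0..2*pi} (\<lambda>u. (g i (u - c))\<^sup>2) = integral {0..2*pi} (\<lambda>u. (g i u)\<^sup>2)" for i c
  proof -
    have "integral {0..2*pi} (\<lambda>u. (g i (u - c))\<^sup>2) = integral {-c..-c+2*pi} (\<lambda>u. (g i u)\<^sup>2)"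
      using integral_shift_real_ivl[of "-c" "-c" "-c+2*pi" "\<lambda>u. (g i u)\<^sup>2"] by simp
    also have "\<dots> = integral {0..2*pi} (\<lambda>u. (g i u)\<^sup>2)"
      by (rule per_int) (auto intro!: continuous_intros cont_shift[OF gc] simp: gp)
    finally show ?thesis .
  qed
  define C where "C = (\<Sum>i\<in>{1..n}. integral {0..2*pi} (\<lambda>u. (g i u)\<^sup>2))"
  have intsum: "integral {0..2*pi} (\<lambda>u. \<Sum>i\<in>{1..n}. (g i (u - a p i))\<^sup>2) = C" for p
  proof -
    have "integral {0..2*pi} (\<lambda>u. \<Sum>i\<in>{1..n}. (g i (u - a p i))\<^sup>2)
        = (\<Sum>i\<in>{1..n}. integral {0..2*pi} (\<lambda>u. (g i (u - a p i))\<^sup>2))"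
      by (rule integral_sum) (auto intro!: integrable_continuous_real continuous_intros cont_shift[OF gc])
    then show ?thesis unfolding C_def shift .
  qed
  have ge: "C \<le> integral {0..2*pi} (\<lambda>u. (\<Sum>i\<in>{1..n}. g i (u - a p i))\<^sup>2)" for p
    unfolding intsum[of p, symmetric]
    by (rule integral_le)
       (auto intro!: integrable_continuous_real continuous_intros cont_shift[OF gc] cont_shift[OF G_cont] sq_sum_ge
         simp: g_def G_nonneg)
  have eq: "integral {0..2*pi} (\<lambda>u. (\<Sum>i\<in>{1..n}. g i (u - a pstar i))\<^sup>2) = C"
  proof -
    have "(\<Sum>i\<in>{1..n}. g i (u - a pstar i))\<^sup>2 = (\<Sum>i\<in>{1..n}. (g i (u - a pstar i))\<^sup>2)" for u
    proof (rule sq_sum_eq)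
      fix i j assume ij: "i \<in> {1..n}" "j \<in> {1..n}" "i \<noteq> j"
      show "g i (u - a pstar i) * g j (u - a pstar j) = 0"
      proof (rule ccontr)
        assume "g i (u - a pstar i) * g j (u - a pstar j) \<noteq> 0"
        then have nz: "g i (u - a pstar i) \<noteq> 0" "g j (u - a pstar j) \<noteq> 0" by auto
        have "u \<in> cov_region rs \<omega> (phi0 k) (\<alpha> k) (pstar k) 0" if "k \<in> {1..n}" "g k (u - a pstar k) \<noteq> 0" for k
        proof -
          have "arccos (cos (u - a pstar k)) < \<alpha> k"
            using G_nz[of "\<alpha> k" "psim k"] that \<alpha>_rng psim_pos unfolding g_def by blast
          then show ?thesis
            unfolding cov_region_def abs_wrap by (simp add: conf_angle_def a_def)
        qed
        then show False using nz ij nonoverlap[OF ij, of 0] by blast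
      qed
    qed simp
    then show ?thesis using intsum[of pstar] by simp
  qed
  show ?thesis
  proof (intro exI[of _ 1] conjI allI impI)
    fix p
    show "coverage_cost n rs \<omega> phi0 \<alpha> psim \<mu> pstar \<le> coverage_cost n rs \<omega> phi0 \<alpha> psim \<mu> p"
      unfolding formula using ge[of p] eq by simp
  qed simp
qed

end
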